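(* Let $\Gamma$ be a simplicial complex and $p\ge 0$ an integer with $\mathrm{gr}_p(\Gamma)<\infty$. Then $\mathrm{gr}_{p-k}(\Gamma)\le \mathrm{gr}_p(\Gamma)-k$ for all $0\le k\le p$.
   Context: A simplicial complex $\Gamma$ on a finite vertex set $V=V(\Gamma)$ is a family of subsets of $V$ (faces) closed under taking subsets. For $W\subseteq V$, $\Gamma[W]=\{F\in\Gamma:F\subseteq W\}$; for a face $F$ (possibly empty), $\mathrm{lk}_\Gamma(F)=\{G\setminus F: F\subseteq G\in\Gamma\}$. Fix a field $\mathbf{k}$; $\tilde H_j(\cdot;\mathbf{k})$ is reduced simplicial homology (so $\tilde H_{-1}$ of the empty complex $\{\emptyset\}$ is nonzero). For $q\ge 0$, the $(q-1)$-girth is $\mathrm{gr}_{q-1}(\Gamma)=\min\{|W|: W\subseteq V(\Gamma),\ \tilde H_{q-1}(\mathrm{lk}_\Gamma(F)[W];\mathbf{k})\neq 0 \text{ for some face } F\in\Gamma \text{ (including } F=\emptyset)\}$, or $\infty$ if none exists. *)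

theory Defs
  imports Main "HOL-Library.Extended_Nat"
begin

definition simplicial_complex :: "'a set \<Rightarrow> 'a set set \<Rightarrow> bool" where
  "simplicial_complex V K \<longleftrightarrow> finite V \<and> (\<forall>F\<in>K. F \<subseteq> V) \<and>
     (\<forall>F\<in>K. \<forall>G. G \<subseteq> F \<longrightarrow> G \<in> K)"

definition induced :: "'a set set \<Rightarrow> 'a set \<Rightarrow> 'a set set" where
  "induced K W = {F \<in> K. F \<subseteq> W}"

definition link :: "'a set set \<Rightarrow> 'a set \<Rightarrow> 'a set set" where
  "link K F = {G - F | G. F \<subseteq> G \<and> G \<in> K}"

text \<open>Simplicial boundary map on chains (functions from finite vertex sets to the field),
using the orientation induced by the linear order on vertices; V is an ambient finite
vertex set containing all faces.\<close>
definition bd :: "'a::linorder set \<Rightarrow> ('a set \<Rightarrow> 'k::field) \<Rightarrow> 'a set \<Rightarrow> 'k" where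
  "bd V c G = (\<Sum>v\<in>V - G. (-1) ^ card {u\<in>G. u < v} * c (insert v G))"

text \<open>chains of K with coefficients in 'k supported on faces with d vertices
 (i.e. simplicial (d-1)-chains, including the (-1)-chains on the empty face)\<close>
definition chains :: "'a set set \<Rightarrow> nat \<Rightarrow> ('a set \<Rightarrow> 'k::field) set" where
  "chains K d = {c. \<forall>F. c F \<noteq> 0 \<longrightarrow> F \<in> K \<and> card F = d}"

text \<open>red_hom_nonzero TYPE('k) V K d  means  \<open>H~_{d-1}(K; k) \<noteq> 0\<close> (reduced homology, augmented
chain complex): there is a (d-1)-cycle which is not a boundary.\<close>
definition red_hom_nonzero :: "'k::field itself \<Rightarrow> 'a::linorder set \<Rightarrow> 'a set set \<Rightarrow> nat \<Rightarrow> bool" where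
  "red_hom_nonzero _ V K d \<longleftrightarrow>
     (\<exists>z::'a set \<Rightarrow> 'k. z \<in> chains K d \<and>
        (\<forall>G. card G + 1 = d \<longrightarrow> bd V z G = 0) \<and>
        \<not> (\<exists>c::'a set \<Rightarrow> 'k. c \<in> chains K (d + 1) \<and> (\<forall>F. card F = d \<longrightarrow> bd V c F = z F)))"

text \<open>girth TYPE('k) V K p = gr_p(K) for p \<ge> 0 (homology in degree p, i.e. faces with p+1 vertices).\<close>
definition girth :: "'k::field itself \<Rightarrow> 'a::linorder set \<Rightarrow> 'a set set \<Rightarrow> nat \<Rightarrow> enat" where
  "girth T V K p =
     (if \<exists>W F. W \<subseteq> V \<and> F \<in> K \<and> red_hom_nonzero T V (induced (link K F) W) (p + 1)
      then enat (LEAST n. \<exists>W F. W \<subseteq> V \<and> card W = n \<and> F \<in> K \<and>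
                   red_hom_nonzero T V (induced (link K F) W) (p + 1))
      else \<infinity>)"

end

theory Submission imports Defs begin
definition sg :: "'a::linorder \<Rightarrow> 'a set \<Rightarrow> 'k::field" where
  "sg u G = (-1) ^ card {x\<in>G. x < u}"

lemma bd_alt: "bd V c G = (\<Sum>u\<in>V - G. sg u G * c (insert u G))"
  by (simp add: bd_def sg_def)

lemma sg_insert:
  assumes "finite G" "v \<notin> G" "u \<noteq> v"
  shows "(sg u (insert v G) :: 'k::field) = (if v < u then -1 else 1) * sg u G"
proof (cases "v < u")
  case True
  have eq: "{x\<in>insert v G. x < u} = insert v {x\<in>G. x < u}" using True by auto
  have "finite {x\<in>G. x < u}" using assms(1) by simp
  moreover have "v \<notin> {x\<in>G. x < u}" using assms(2) by simp
  ultimately show ?thesis using True unfolding sg_def eq by simp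
next
  case False
  have eq: "{x\<in>insert v G. x < u} = {x\<in>G. x < u}" using False by auto
  show ?thesis using False unfolding sg_def eq by simp
qed

lemma sg_sq: "(sg u G :: 'k::field) * sg u G = 1"
  by (simp add: sg_def flip: power_add)

lemma sg_swap:
  assumes "finite G" "u \<notin> G" "v \<notin> G" "u \<noteq> v"
  shows "(sg u G :: 'k::field) * sg v (insert u G) = - (sg v G * sg u (insert v G))"
proof (cases "u < v")
  case True
  then have "\<not> v < u" by simp
  then show ?thesis using sg_insert[where 'k='k, OF assms(1) assms(3), of u] sg_insert[where 'k='k, OF assms(1) assms(2), of v] assms(4) True
    by (simp add: algebra_simps)
next
  case False
  then have "v < u" using assms(4) by simp
  then show ?thesis using sg_insert[where 'k='k, OF assms(1) assms(3), of u] sg_insert[where 'k='k, OF assms(1) assms(2), of v] assms(4) False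
    by (simp add: algebra_simps)
qed

lemma sg_swap2:
  assumes "finite G" "u \<notin> G" "v \<notin> G" "u \<noteq> v"
  shows "(sg u (insert v G) :: 'k::field) * sg v (insert u G) = - (sg u G * sg v G)"
proof (cases "u < v")
  case True
  then have "\<not> v < u" by simp
  then show ?thesis using sg_insert[where 'k='k, OF assms(1) assms(3), of u] sg_insert[where 'k='k, OF assms(1) assms(2), of v] assms(4) True
    by (simp add: algebra_simps)
next
  case False
  then have "v < u" using assms(4) by simp
  then show ?thesis using sg_insert[where 'k='k, OF assms(1) assms(3), of u] sg_insert[where 'k='k, OF assms(1) assms(2), of v] assms(4) False
    by (simp add: algebra_simps)
qed

lemma mem_ind_link: "X \<in> induced (link K F) W \<longleftrightarrow> X \<subseteq> W \<and> X \<inter> F = {} \<and> X \<union> F \<in> K"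
proof
  assume "X \<in> induced (link K F) W"
  then obtain G where "X \<subseteq> W" "X = G - F" "F \<subseteq> G" "G \<in> K" unfolding induced_def link_def by blast
  moreover have "G - F \<union> F = G" using \<open>F \<subseteq> G\<close> by blast
  ultimately show "X \<subseteq> W \<and> X \<inter> F = {} \<and> X \<union> F \<in> K" by auto
next
  assume a: "X \<subseteq> W \<and> X \<inter> F = {} \<and> X \<union> F \<in> K"
  then have "X = (X \<union> F) - F" by blast
  then show "X \<in> induced (link K F) W" unfolding induced_def link_def using a by blast
qed

lemma core:
  fixes V :: "'a::linorder set" and K :: "'a set set" and F W :: "'a set" and p :: nat
  assumes sc: "simplicial_complex V K" and FK: "F \<in> K" and WV: "W \<subseteq> V"
    and rh: "red_hom_nonzero TYPE('k::field) V (induced (link K F) W) (p+1)"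
    and minW: "\<And>W'. W' \<subseteq> V \<Longrightarrow> card W' < card W \<Longrightarrow> \<not> red_hom_nonzero TYPE('k) V (induced (link K F) W') (p+1)"
  shows "\<exists>v\<in>W. insert v F \<in> K \<and> red_hom_nonzero TYPE('k) V (induced (link K (insert v F)) (W - {v})) p"
proof -
  have finV: "finite V" and KV: "\<And>X. X \<in> K \<Longrightarrow> X \<subseteq> V"
    and Kdown: "\<And>X Y. X \<in> K \<Longrightarrow> Y \<subseteq> X \<Longrightarrow> Y \<in> K"
    using sc unfolding simplicial_complex_def by blast+
  have finK: "\<And>X. X \<in> K \<Longrightarrow> finite X" using KV finV finite_subset by blast
  have finW: "finite W" using WV finV finite_subset by blast
  obtain z :: "'a set \<Rightarrow> 'k" where
    zch: "z \<in> chains (induced (link K F) W) (p+1)"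
    and zcyc0: "\<forall>G. card G + 1 = p+1 \<longrightarrow> bd V z G = 0"
    and znb0: "\<not> (\<exists>c::'a set \<Rightarrow> 'k. c \<in> chains (induced (link K F) W) (p + 1 + 1) \<and> (\<forall>H. card H = p+1 \<longrightarrow> bd V c H = z H))"
    using rh unfolding red_hom_nonzero_def by blast
  have zc: "\<And>H. z H \<noteq> 0 \<Longrightarrow> H \<subseteq> W \<and> H \<inter> F = {} \<and> H \<union> F \<in> K \<and> card H = p+1"
    using zch unfolding chains_def mem_ind_link by blast
  have zcyc: "\<And>G. card G = p \<Longrightarrow> bd V z G = 0" using zcyc0 by simp
  have zfin: "\<And>H. z H \<noteq> 0 \<Longrightarrow> finite H"
    using zc finK by (meson finite_Un)
  obtain H0 where H0: "z H0 \<noteq> 0"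
  proof -
    have "\<exists>H. z H \<noteq> 0"
    proof (rule ccontr)
      assume "\<not> (\<exists>H. z H \<noteq> 0)"
      then have "\<forall>H. z H = 0" by blast
      then have "(\<lambda>_. 0::'k) \<in> chains (induced (link K F) W) (p + 1 + 1) \<and> (\<forall>H. card H = p+1 \<longrightarrow> bd V (\<lambda>_. 0::'k) H = z H)"
        by (simp add: chains_def bd_def)
      then show False using znb0 by blast
    qed
    then show ?thesis using that by blast
  qed
  have "card H0 = p+1" using zc[OF H0] by blast
  then obtain v where vH0: "v \<in> H0" by fastforce
  have vW: "v \<in> W" and vF: "v \<notin> F" and vV: "v \<in> V" using zc[OF H0] vH0 WV by blast+
  have vFK: "insert v F \<in> K" using zc[OF H0] vH0 Kdown by blast
  define z' :: "'a set \<Rightarrow> 'k" where "z' G = (if v \<in> G then 0 else sg v G * z (insert v G))" for G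
  have z'ch: "z' \<in> chains (induced (link K (insert v F)) (W - {v})) p"
    unfolding chains_def mem_ind_link mem_Collect_eq
  proof (intro allI impI)
    fix G assume "z' G \<noteq> 0"
    then have vG: "v \<notin> G" and zG: "z (insert v G) \<noteq> 0" unfolding z'_def by (auto split: if_splits)
    have "finite G" using zfin[OF zG] by simp
    then show "(G \<subseteq> W - {v} \<and> G \<inter> insert v F = {} \<and> G \<union> insert v F \<in> K) \<and> card G = p"
      using zc[OF zG] vG by auto
  qed
  have z'cyc: "\<forall>G. card G + 1 = p \<longrightarrow> bd V z' G = 0"
  proof (intro allI impI)
    fix G :: "'a set" assume cG: "card G + 1 = p"
    show "bd V z' G = 0"
    proof (cases "v \<in> G")
      case True
      then show ?thesis unfolding bd_alt z'_def by simp
    next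
      case vG: False
      show ?thesis
      proof (cases "finite G")
        case False
        have "z' (insert u G) = 0" for u
          using zfin[of "insert v (insert u G)"] False unfolding z'_def by auto
        then show ?thesis unfolding bd_alt by simp
      next
        case finG: True
        have VG: "V - G = insert v (V - insert v G)" using vV vG by blast
        have "bd V z' G = (\<Sum>u\<in>V - insert v G. sg u G * z' (insert u G))"
          unfolding bd_alt VG using finV by (simp add: z'_def)
        also have "\<dots> = (\<Sum>u\<in>V - insert v G. - sg v G * (sg u (insert v G) * z (insert u (insert v G))))"
        proof (rule sum.cong)
          fix u assume u: "u \<in> V - insert v G"
          then have "u \<noteq> v" "u \<notin> G" by auto
          then show "sg u G * z' (insert u G) = - sg v G * (sg u (insert v G) * z (insert u (insert v G)))"
          proof -
            have "sg u G * z' (insert u G) = (sg u G * sg v (insert u G)) * z (insert u (insert v G))"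
              using \<open>u \<noteq> v\<close> vG unfolding z'_def by (simp add: insert_commute mult.assoc)
            also have "\<dots> = - (sg v G * sg u (insert v G)) * z (insert u (insert v G))"
              using sg_swap[where 'k='k, OF finG \<open>u \<notin> G\<close> vG \<open>u \<noteq> v\<close>] by simp
            finally show ?thesis by (simp add: mult.assoc)
          qed
        qed simp
        also have "\<dots> = - sg v G * bd V z (insert v G)"
          unfolding bd_alt by (simp add: sum_distrib_left)
        also have "bd V z (insert v G) = 0" using zcyc cG finG vG by simp
        finally show ?thesis by simp
      qed
    qed
  qed
  have z'nb: "\<not> (\<exists>c::'a set \<Rightarrow> 'k. c \<in> chains (induced (link K (insert v F)) (W - {v})) (p + 1) \<and> (\<forall>G. card G = p \<longrightarrow> bd V c G = z' G))"
  proof (rule notI, elim exE conjE)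
    fix c' :: "'a set \<Rightarrow> 'k"
    assume c'ch: "c' \<in> chains (induced (link K (insert v F)) (W - {v})) (p + 1)"
      and c'bd: "\<forall>G. card G = p \<longrightarrow> bd V c' G = z' G"
    have c'c: "\<And>H. c' H \<noteq> 0 \<Longrightarrow> H \<subseteq> W - {v} \<and> H \<inter> insert v F = {} \<and> H \<union> insert v F \<in> K \<and> card H = p+1"
      using c'ch unfolding chains_def mem_ind_link by blast
    define y :: "'a set \<Rightarrow> 'k" where "y H = (if v \<in> H then 0 else z H + c' H)" for H
    have ych: "y \<in> chains (induced (link K F) (W - {v})) (p+1)"
      unfolding chains_def mem_ind_link mem_Collect_eq
    proof (intro allI impI)
      fix H assume "y H \<noteq> 0"
      then have vH: "v \<notin> H" and nz: "z H \<noteq> 0 \<or> c' H \<noteq> 0" unfolding y_def by (auto split: if_splits)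
      from nz show "(H \<subseteq> W - {v} \<and> H \<inter> F = {} \<and> H \<union> F \<in> K) \<and> card H = p + 1"
      proof
        assume "z H \<noteq> 0" then show ?thesis using zc vH by blast
      next
        assume a: "c' H \<noteq> 0"
        have "H \<union> F \<in> K" using c'c[OF a] Kdown[of "H \<union> insert v F" "H \<union> F"] by blast
        then show ?thesis using c'c[OF a] by blast
      qed
    qed
    have ycyc: "\<forall>G. card G + 1 = p + 1 \<longrightarrow> bd V y G = 0"
    proof (intro allI impI)
      fix G :: "'a set" assume "card G + 1 = p + 1"
      then have cG: "card G = p" by simp
      show "bd V y G = 0"
      proof (cases "v \<in> G")
        case True
        then show ?thesis unfolding bd_alt y_def by simp
      next
        case vG: False
        have VG: "V - G = insert v (V - insert v G)" using vV vG by blast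
        have fin2: "finite (V - insert v G)" using finV by simp
        have c'v: "c' (insert v G) = 0" using c'c by blast
        have "bd V y G = (\<Sum>u\<in>V - insert v G. sg u G * z (insert u G)) + (\<Sum>u\<in>V - insert v G. sg u G * c' (insert u G))"
        proof -
          have "bd V y G = (\<Sum>u\<in>V - insert v G. sg u G * y (insert u G))"
            unfolding bd_alt VG using fin2 vG by (simp add: y_def)
          also have "\<dots> = (\<Sum>u\<in>V - insert v G. sg u G * z (insert u G) + sg u G * c' (insert u G))"
            by (rule sum.cong) (use vG in \<open>auto simp: y_def distrib_left\<close>)
          finally show ?thesis by (simp add: sum.distrib)
        qed
        moreover have "bd V z G = sg v G * z (insert v G) + (\<Sum>u\<in>V - insert v G. sg u G * z (insert u G))"
          unfolding bd_alt VG using fin2 by simp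
        moreover have "bd V c' G = sg v G * c' (insert v G) + (\<Sum>u\<in>V - insert v G. sg u G * c' (insert u G))"
          unfolding bd_alt VG using fin2 by simp
        ultimately show ?thesis using zcyc[OF cG] c'bd cG c'v vG by (simp add: z'_def add.commute)
      qed
    qed
    have "card (W - {v}) < card W" using finW vW by (meson card_Diff1_less)
    then have "\<not> red_hom_nonzero TYPE('k) V (induced (link K F) (W - {v})) (p+1)"
      using minW WV by blast
    then obtain c'' :: "'a set \<Rightarrow> 'k" where c''ch: "c'' \<in> chains (induced (link K F) (W - {v})) (p + 1 + 1)"
      and c''bd: "\<forall>H. card H = p + 1 \<longrightarrow> bd V c'' H = y H"
      using ych ycyc unfolding red_hom_nonzero_def by blast
    have c''c: "\<And>H. c'' H \<noteq> 0 \<Longrightarrow> H \<subseteq> W - {v} \<and> H \<inter> F = {} \<and> H \<union> F \<in> K \<and> card H = p+2"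
      using c''ch unfolding chains_def mem_ind_link by auto
    define w :: "'a set \<Rightarrow> 'k" where "w H = (if v \<in> H then - (sg v (H - {v}) * c' (H - {v})) else 0)" for H
    define c :: "'a set \<Rightarrow> 'k" where "c H = w H + c'' H" for H
    have cch: "c \<in> chains (induced (link K F) W) (p + 1 + 1)"
      unfolding chains_def mem_ind_link mem_Collect_eq
    proof (intro allI impI)
      fix H assume "c H \<noteq> 0"
      then have "w H \<noteq> 0 \<or> c'' H \<noteq> 0" unfolding c_def by auto
      then show "(H \<subseteq> W \<and> H \<inter> F = {} \<and> H \<union> F \<in> K) \<and> card H = p + 1 + 1"
      proof
        assume "c'' H \<noteq> 0" then show ?thesis using c''c by auto
      next
        assume "w H \<noteq> 0"
        then have vH: "v \<in> H" and a: "c' (H - {v}) \<noteq> 0" unfolding w_def by (auto split: if_splits)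
        note b = c'c[OF a]
        have HH: "H = insert v (H - {v})" using vH by blast
        have fH: "finite (H - {v})" using b finK by (meson finite_Un)
        have "card H = p + 2" using b fH vH card_gt_0_iff[of H] by auto
        moreover have "H \<union> F = (H - {v}) \<union> insert v F" using vH by blast
        ultimately show ?thesis using b vW vF by auto
      qed
    qed
    have cbd: "\<forall>H. card H = p + 1 \<longrightarrow> bd V c H = z H"
    proof (intro allI impI)
      fix H :: "'a set" assume cH: "card H = p + 1"
      have "bd V c H = bd V w H + bd V c'' H" unfolding bd_alt c_def
        by (simp add: distrib_left sum.distrib)
      also have "\<dots> = z H"
      proof (cases "v \<in> H")
        case vH: True
        define H1 where "H1 = H - {v}"
        have finH: "finite H" using cH by (metis card.infinite add_is_0 one_neq_zero)
        have HH: "H = insert v H1" and vH1: "v \<notin> H1" and fH1: "finite H1" using vH finH unfolding H1_def by auto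
        have cH1: "card H1 = p" using cH HH vH1 fH1 by simp
        have VH: "V - H1 = insert v (V - H)" using vV vH unfolding H1_def by blast
        have fin2: "finite (V - H)" using finV by simp
        have c'v: "c' (insert v H1) = 0" using c'c by blast
        have "bd V c' H1 = (\<Sum>u\<in>V - H. sg u H1 * c' (insert u H1))"
          unfolding bd_alt VH using fin2 c'v by (simp add: HH)
        then have e1: "(\<Sum>u\<in>V - H. sg u H1 * c' (insert u H1)) = sg v H1 * z H"
          using c'bd cH1 vH1 HH unfolding z'_def by simp
        have "bd V w H = (\<Sum>u\<in>V - H. sg v H1 * (sg u H1 * c' (insert u H1)))"
          unfolding bd_alt
        proof (rule sum.cong)
          fix u assume u: "u \<in> V - H"
          then have uv: "u \<noteq> v" and uH1: "u \<notin> H1" using HH by auto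
          have e: "insert u H - {v} = insert u H1" using uv HH vH1 by auto
          have "w (insert u H) = - (sg v (insert u H1) * c' (insert u H1))"
            unfolding w_def e using vH by simp
          then have "sg u H * w (insert u H) = - (sg u (insert v H1) * sg v (insert u H1)) * c' (insert u H1)"
            using HH by (simp add: mult.assoc)
          also have "\<dots> = sg v H1 * (sg u H1 * c' (insert u H1))"
            unfolding sg_swap2[where 'k='k, OF fH1 uH1 vH1 uv] by (simp add: algebra_simps)
          finally show "sg u H * w (insert u H) = sg v H1 * (sg u H1 * c' (insert u H1))" .
        qed simp
        also have "\<dots> = sg v H1 * (sg v H1 * z H)" using e1 by (simp add: sum_distrib_left[symmetric])
        also have "\<dots> = z H" using sg_sq[where 'k='k, of v H1] by (simp add: mult.assoc[symmetric])
        finally have "bd V w H = z H" .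
        moreover have "bd V c'' H = 0" using c''bd cH vH unfolding y_def by simp
        ultimately show ?thesis by simp
      next
        case vH: False
        have VH: "V - H = insert v (V - insert v H)" using vV vH by blast
        have fin2: "finite (V - insert v H)" using finV by simp
        have "bd V w H = sg v H * w (insert v H)"
        proof -
          have "(\<Sum>u\<in>V - insert v H. sg u H * w (insert u H)) = 0"
            by (rule sum.neutral) (use vH in \<open>auto simp: w_def\<close>)
          then show ?thesis unfolding bd_alt VH using fin2 by simp
        qed
        also have "\<dots> = - c' H" using vH sg_sq[where 'k='k, of v H] unfolding w_def
          by (simp add: mult.assoc[symmetric])
        finally have "bd V w H = - c' H" .
        moreover have "bd V c'' H = z H + c' H" using c''bd cH vH unfolding y_def by simp
        ultimately show ?thesis by simp
      qed
      finally show "bd V c H = z H" .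
    qed
    show False using znb0 cch cbd by blast
  qed
  have "red_hom_nonzero TYPE('k) V (induced (link K (insert v F)) (W - {v})) p"
    unfolding red_hom_nonzero_def using z'ch z'cyc z'nb by blast
  then show ?thesis using vW vFK by blast
qed

lemma step:
  fixes V :: "'a::linorder set" and K :: "'a set set" and p n :: nat
  assumes sc: "simplicial_complex V K" and p1: "1 \<le> p"
    and g: "girth TYPE('k::field) V K p = enat n"
  shows "girth TYPE('k) V K (p - 1) \<le> enat (n - 1)"
proof -
  let ?P = "\<lambda>q n. \<exists>W F. W \<subseteq> V \<and> card W = n \<and> F \<in> K \<and> red_hom_nonzero TYPE('k) V (induced (link K F) W) (q + 1)"
  have ex0: "\<exists>W F. W \<subseteq> V \<and> F \<in> K \<and> red_hom_nonzero TYPE('k) V (induced (link K F) W) (p + 1)"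
  proof (rule ccontr)
    assume "\<not> ?thesis"
    then have "girth TYPE('k) V K p = \<infinity>" unfolding girth_def by (simp only: if_False)
    then show False using g by simp
  qed
  then obtain W0 F0 where "W0 \<subseteq> V \<and> F0 \<in> K \<and> red_hom_nonzero TYPE('k) V (induced (link K F0) W0) (p + 1)" by blast
  then have "?P p (card W0)" by blast
  then have ex: "\<exists>m. ?P p m" by (rule exI)
  have "girth TYPE('k) V K p = enat (LEAST m. ?P p m)" unfolding girth_def using ex0 by (simp only: if_True)
  then have nL: "n = (LEAST m. ?P p m)" using g by simp
  from LeastI_ex[OF ex] obtain W F where WV: "W \<subseteq> V" and cW: "card W = n" and FK: "F \<in> K"
    and rh: "red_hom_nonzero TYPE('k) V (induced (link K F) W) (p + 1)"
    unfolding nL[symmetric] by blast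
  have minW: "\<not> red_hom_nonzero TYPE('k) V (induced (link K F) W') (p+1)"
    if "W' \<subseteq> V" "card W' < card W" for W'
  proof
    assume "red_hom_nonzero TYPE('k) V (induced (link K F) W') (p+1)"
    then have "?P p (card W')" using that FK by blast
    then have "n \<le> card W'" unfolding nL by (rule Least_le)
    then show False using that cW by simp
  qed
  obtain v where vW: "v \<in> W" and vF: "insert v F \<in> K"
    and rh': "red_hom_nonzero TYPE('k) V (induced (link K (insert v F)) (W - {v})) p"
    using core[OF sc FK WV rh minW] by blast
  have pp: "p - 1 + 1 = p" using p1 by simp
  have "finite V" using sc unfolding simplicial_complex_def by blast
  then have fW: "finite W" using WV finite_subset by blast
  have cW': "card (W - {v}) = n - 1" using cW vW fW by simp
  have P': "?P (p - 1) (n - 1)"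
    by (rule exI[of _ "W - {v}"], rule exI[of _ "insert v F"]) (use rh' cW' vF WV pp in auto)
  have ex1: "\<exists>W F. W \<subseteq> V \<and> F \<in> K \<and> red_hom_nonzero TYPE('k) V (induced (link K F) W) (p - 1 + 1)"
    by (rule exI[of _ "W - {v}"], rule exI[of _ "insert v F"]) (use rh' vF WV pp in auto)
  have "girth TYPE('k) V K (p - 1) = enat (LEAST m. ?P (p - 1) m)"
    unfolding girth_def using ex1 by (simp only: if_True)
  also have "\<dots> \<le> enat (n - 1)" using Least_le[of "?P (p - 1)", OF P'] by simp
  finally show ?thesis .
qed

theorem mainTheorem11:
  fixes V :: "'a::linorder set" and K :: "'a set set" and p k :: nat
  assumes "simplicial_complex V K"
    and "girth TYPE('f::field) V K p \<noteq> \<infinity>"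
    and "k \<le> p"
  shows "girth TYPE('f::field) V K (p - k) \<le> girth TYPE('f) V K p - enat k"
proof -
  obtain n where g: "girth TYPE('f) V K p = enat n" using assms(2) by (cases "girth TYPE('f) V K p") auto
  have "k \<le> p \<Longrightarrow> girth TYPE('f) V K (p - k) \<le> enat (n - k)" for k
  proof (induction k)
    case 0 then show ?case using g by simp
  next
    case (Suc k)
    then have le: "girth TYPE('f) V K (p - k) \<le> enat (n - k)" by simp
    then obtain m where m1: "girth TYPE('f) V K (p - k) = enat m"
      using enat_ile by blast
    have m2: "m \<le> n - k" using le m1 by simp
    have pk: "1 \<le> p - k" using Suc.prems by simp
    have "girth TYPE('f) V K (p - k - 1) \<le> enat (m - 1)"
      by (rule step[OF assms(1) pk m1])
    also have "\<dots> \<le> enat (n - Suc k)" using m2 by simp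
    finally have "girth TYPE('f) V K (p - k - 1) \<le> enat (n - Suc k)" .
    moreover have "p - k - 1 = p - Suc k" by simp
    ultimately show ?case by simp
  qed
  then have "girth TYPE('f) V K (p - k) \<le> enat (n - k)" using assms(3) .
  then show ?thesis using g by simp
qed
end
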